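(* Let $G$ be a finite simple graph without isolated vertices. Then Dom has a winning strategy in the Bicolored Domination Game on $G$, both when Dom makes the first move and when Sepy makes the first move.
   Context: For a vertex $v$ of a graph $G$, $N[v]$ denotes its closed neighborhood. The Bicolored Domination Game on an isolate-free graph $G$ is played by two players, Dom and Sepy, who alternately color vertices; Dom may only use the color $p$ (purple) and Sepy may only use the color $b$ (blue). At any stage $V_p$ and $V_b$ denote the sets of vertices colored $p$ and $b$. A player whose color is $c$ makes a move by choosing a vertex $v$ such that (i) $v$ is not yet colored, and (ii) there exists $u\in N[v]$ with $N[u]\cap V_c=\emptyset$ (evaluated before the move); then $v$ receives color $c$. The game terminates as soon as one of the following holds: (s* ) some vertex $v$ has $N[v]\subseteq V_p$ or $N[v]\subseteq V_b$ — then Sepy wins; (d** ) for some color $c\in\{p,b\}$, $V_c$ dominates all vertices of $G$ and no vertex $v$ satisfies $N[v]\subseteq V_c$ — then Dom wins. *)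

theory Defs
  imports Main
begin

text \<open>Simple graph: vertex set V, adjacency E (symmetric, irreflexive, edges inside V).\<close>

definition cnbhd :: "'a set \<Rightarrow> ('a \<Rightarrow> 'a \<Rightarrow> bool) \<Rightarrow> 'a \<Rightarrow> 'a set" where
  "cnbhd V E v = {u \<in> V. u = v \<or> E v u}"

text \<open>Legal move for the player whose colour class is C (current classes P, B):
  v uncoloured and some u in N[v] has N[u] disjoint from C.\<close>
definition legal_move :: "'a set \<Rightarrow> ('a \<Rightarrow> 'a \<Rightarrow> bool) \<Rightarrow> 'a set \<Rightarrow> 'a set \<Rightarrow> 'a set \<Rightarrow> 'a \<Rightarrow> bool" where
  "legal_move V E P B C v \<longleftrightarrow> v \<in> V \<and> v \<notin> P \<and> v \<notin> B \<and>
     (\<exists>u \<in> cnbhd V E v. cnbhd V E u \<inter> C = {})"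

definition sepy_cond :: "'a set \<Rightarrow> ('a \<Rightarrow> 'a \<Rightarrow> bool) \<Rightarrow> 'a set \<Rightarrow> 'a set \<Rightarrow> bool" where
  "sepy_cond V E P B \<longleftrightarrow> (\<exists>v \<in> V. cnbhd V E v \<subseteq> P \<or> cnbhd V E v \<subseteq> B)"

definition dom_cond1 :: "'a set \<Rightarrow> ('a \<Rightarrow> 'a \<Rightarrow> bool) \<Rightarrow> 'a set \<Rightarrow> bool" where
  "dom_cond1 V E C \<longleftrightarrow> (\<forall>v \<in> V. cnbhd V E v \<inter> C \<noteq> {}) \<and> \<not> (\<exists>v \<in> V. cnbhd V E v \<subseteq> C)"

definition dom_cond :: "'a set \<Rightarrow> ('a \<Rightarrow> 'a \<Rightarrow> bool) \<Rightarrow> 'a set \<Rightarrow> 'a set \<Rightarrow> bool" where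
  "dom_cond V E P B \<longleftrightarrow> dom_cond1 V E P \<or> dom_cond1 V E B"

text \<open>dom_forces V E d P B: from the position with purple set P, blue set B and
  Dom to move iff d, Dom can force a win (in finitely many moves).
  Sepy-win condition (s*) takes precedence; a player with no legal move in a
  non-terminal position is counted as a Dom failure (never happens in real play).\<close>
inductive dom_forces :: "'a set \<Rightarrow> ('a \<Rightarrow> 'a \<Rightarrow> bool) \<Rightarrow> bool \<Rightarrow> 'a set \<Rightarrow> 'a set \<Rightarrow> bool"
  for V E where
  terminal: "\<not> sepy_cond V E P B \<Longrightarrow> dom_cond V E P B \<Longrightarrow> dom_forces V E d P B"
| dom_move: "\<not> sepy_cond V E P B \<Longrightarrow> \<not> dom_cond V E P B \<Longrightarrow> legal_move V E P B P v
     \<Longrightarrow> dom_forces V E False (insert v P) B \<Longrightarrow> dom_forces V E True P B"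
| sepy_move: "\<not> sepy_cond V E P B \<Longrightarrow> \<not> dom_cond V E P B \<Longrightarrow> (\<exists>v. legal_move V E P B B v)
     \<Longrightarrow> (\<forall>v. legal_move V E P B B v \<longrightarrow> dom_forces V E True P (insert v B))
     \<Longrightarrow> dom_forces V E False P B"

end

theory Submission
  imports Defs
begin

locale bgame =
  fixes V :: "'a set" and E :: "'a \<Rightarrow> 'a \<Rightarrow> bool"
  assumes fin: "finite V"
    and inV: "\<And>u v. E u v \<Longrightarrow> u \<in> V \<and> v \<in> V"
    and sym: "\<And>u v. E u v \<Longrightarrow> E v u"
    and irr: "\<And>v. \<not> E v v"
    and noiso: "\<And>v. v \<in> V \<Longrightarrow> \<exists>u. E v u"
begin

lemma memN: "u \<in> cnbhd V E v \<longleftrightarrow> u \<in> V \<and> (u = v \<or> E v u)"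
  by (auto simp: cnbhd_def)

definition matching :: "'a set \<Rightarrow> ('a \<Rightarrow> 'a) \<Rightarrow> bool" where
  "matching K q \<longleftrightarrow> K \<subseteq> V \<and> (\<forall>v\<in>K. q v \<in> K \<and> q (q v) = v \<and> E v (q v))"

lemma max_matching_ex:
  "\<exists>K q. matching K q \<and> (\<forall>K' q'. matching K' q' \<longrightarrow> card K' \<le> card K)"
proof -
  let ?P = "\<lambda>K. \<exists>q. matching K q"
  have "?P {}" by (auto simp: matching_def)
  moreover have "\<forall>K. ?P K \<longrightarrow> card K < card V + 1"
    using fin by (auto simp: matching_def intro: card_mono le_imp_less_Suc)
  ultimately obtain K where "?P K" and "\<forall>K'. ?P K' \<longrightarrow> card K' \<le> card K"
    using ex_has_greatest_nat[of ?P "{}" card "card V + 1"] by blast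
  then show ?thesis by blast
qed

end

locale bmatch = bgame +
  fixes M :: "'a set" and pt :: "'a \<Rightarrow> 'a"
  assumes mt: "matching M pt"
    and maxm: "\<And>K q. matching K q \<Longrightarrow> card K \<le> card M"
begin

lemma MV: "M \<subseteq> V" using mt by (simp add: matching_def)
lemma ptM: "v \<in> M \<Longrightarrow> pt v \<in> M" using mt by (simp add: matching_def)
lemma ptpt: "v \<in> M \<Longrightarrow> pt (pt v) = v" using mt by (simp add: matching_def)
lemma ptE: "v \<in> M \<Longrightarrow> E v (pt v)" using mt by (simp add: matching_def)
lemma ptne: "v \<in> M \<Longrightarrow> pt v \<noteq> v" using ptE irr by metis

lemma finM: "finite M" using MV fin finite_subset by blast

lemma aug1:
  assumes "x \<notin> M" "y \<notin> M" "E x y"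
  shows False
proof -
  have xy: "x \<noteq> y" using assms irr by metis
  let ?K = "insert x (insert y M)"
  let ?q = "pt(x := y, y := x)"
  have "?K \<subseteq> V" using MV inV assms by auto
  moreover have "\<forall>v\<in>?K. ?q v \<in> ?K \<and> ?q (?q v) = v \<and> E v (?q v)"
  proof
    fix v assume v: "v \<in> ?K"
    show "?q v \<in> ?K \<and> ?q (?q v) = v \<and> E v (?q v)"
    proof (cases "v = x \<or> v = y")
      case True then show ?thesis using xy assms sym by auto
    next
      case False
      then have "v \<in> M" using v by auto
      then have "pt v \<noteq> x" "pt v \<noteq> y" "pt v \<in> M" using assms ptM by auto
      then show ?thesis using False \<open>v \<in> M\<close> ptpt ptE by auto
    qed
  qed
  ultimately have "matching ?K ?q" unfolding matching_def by blast
  then have "card ?K \<le> card M" by (rule maxm)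
  moreover have "card ?K = card M + 2" using assms xy finM by simp
  ultimately show False by simp
qed

lemma aug2:
  assumes "a \<in> M" "u1 \<notin> M" "u2 \<notin> M" "u1 \<noteq> u2" "E a u1" "E (pt a) u2"
  shows False
proof -
  let ?b = "pt a"
  have b: "?b \<in> M" "?b \<noteq> a" "pt ?b = a" using assms ptM ptne ptpt by auto
  let ?K = "insert u1 (insert u2 M)"
  let ?q = "pt(a := u1, u1 := a, ?b := u2, u2 := ?b)"
  have d: "u1 \<noteq> a" "u1 \<noteq> ?b" "u2 \<noteq> a" "u2 \<noteq> ?b" using assms b by auto
  have "?K \<subseteq> V" using MV inV assms by auto
  moreover have "\<forall>v\<in>?K. ?q v \<in> ?K \<and> ?q (?q v) = v \<and> E v (?q v)"
  proof
    fix v assume v: "v \<in> ?K"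
    show "?q v \<in> ?K \<and> ?q (?q v) = v \<and> E v (?q v)"
    proof (cases "v = a \<or> v = ?b \<or> v = u1 \<or> v = u2")
      case True
      then consider "v = a" | "v = ?b" | "v = u1" | "v = u2" by blast
      then show ?thesis
      proof cases
        case 1 then show ?thesis using d b assms by simp
      next
        case 2 then show ?thesis using d b assms by simp
      next
        case 3 then show ?thesis using d b assms sym by simp
      next
        case 4 then show ?thesis using d b assms sym by simp
      qed
    next
      case False
      then have vM: "v \<in> M" using v by auto
      have "pt v \<noteq> a" using False ptpt[OF vM] by metis
      moreover have "pt v \<noteq> ?b" using False ptpt[OF vM] ptpt[OF \<open>a \<in> M\<close>] by metis
      moreover have "pt v \<noteq> u1" "pt v \<noteq> u2" "pt v \<in> M" using assms ptM vM by auto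
      ultimately show ?thesis using False vM ptpt ptE by auto
    qed
  qed
  ultimately have "matching ?K ?q" unfolding matching_def by blast
  then have "card ?K \<le> card M" by (rule maxm)
  moreover have "card ?K = card M + 2" using assms finM by simp
  ultimately show False by simp
qed

end

context bmatch
begin

abbreviation NP :: "'a set \<Rightarrow> 'a \<Rightarrow> bool" where
  "NP P v \<equiv> cnbhd V E v \<inter> P \<noteq> {}"

definition Inv :: "'a set \<Rightarrow> 'a set \<Rightarrow> bool" where
  "Inv P B \<longleftrightarrow> P \<subseteq> V \<and> B \<subseteq> V \<and> P \<inter> B = {} \<and>
    (\<forall>v\<in>M. v \<in> P \<longrightarrow> pt v \<notin> P) \<and>
    (\<forall>v\<in>M. v \<in> B \<longrightarrow> pt v \<notin> P \<longrightarrow> NP P v \<and> NP P (pt v)) \<and>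
    (\<forall>u\<in>V-M. u \<in> B \<longrightarrow> NP P u) \<and>
    (\<forall>u\<in>V-M. u \<in> P \<longrightarrow> (\<exists>w. E u w \<and> w \<in> B)) \<and>
    (\<forall>v\<in>M. v \<in> P \<longrightarrow> pt v \<notin> P \<longrightarrow> pt v \<notin> B \<longrightarrow> (\<forall>u\<in>V-M. E (pt v) u \<longrightarrow> NP P u))"

lemma NP_E: "E v w \<Longrightarrow> w \<in> P \<Longrightarrow> NP P v"
  using inV by (auto simp: cnbhd_def)
lemma NP_self: "v \<in> V \<Longrightarrow> v \<in> P \<Longrightarrow> NP P v"
  by (auto simp: cnbhd_def)
lemma NP_mono: "NP P v \<Longrightarrow> NP (insert y P) v"
  by auto
lemma NP_D: "NP P v \<Longrightarrow> \<exists>w\<in>P. w = v \<or> E v w"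
  by (auto simp: cnbhd_def)
lemma selfN: "v \<in> V \<Longrightarrow> v \<in> cnbhd V E v" by (simp add: cnbhd_def)
lemma EN: "E v w \<Longrightarrow> w \<in> cnbhd V E v" using inV by (simp add: cnbhd_def)

lemma no_mono:
  assumes I: "Inv P B"
  shows "\<not> sepy_cond V E P B"
proof
  assume "sepy_cond V E P B"
  then obtain v where v: "v \<in> V" and c: "cnbhd V E v \<subseteq> P \<or> cnbhd V E v \<subseteq> B"
    by (auto simp: sepy_cond_def)
  from I have disj: "P \<inter> B = {}" by (simp add: Inv_def)
  from c show False
  proof
    assume s: "cnbhd V E v \<subseteq> P"
    then have vP: "v \<in> P" using selfN v by blast
    show False
    proof (cases "v \<in> M")
      case True
      then have "pt v \<in> P" using s EN ptE by blast
      then show False using I True vP by (simp add: Inv_def)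
    next
      case False
      then obtain w where "E v w" "w \<in> B" using I vP v by (auto simp: Inv_def)
      then show False using s EN disj by blast
    qed
  next
    assume s: "cnbhd V E v \<subseteq> B"
    then have vB: "v \<in> B" using selfN v by blast
    have "NP P v"
    proof (cases "v \<in> M")
      case True
      then have "pt v \<in> B" using s EN ptE by blast
      then have "pt v \<notin> P" using disj by blast
      then show ?thesis using I True vB by (simp add: Inv_def)
    next
      case False
      then show ?thesis using I vB v by (simp add: Inv_def)
    qed
    then show False using s disj by blast
  qed
qed

lemma sepy_has_move:
  assumes I: "Inv P B" and nd: "\<not> dom_cond V E P B"
  shows "\<exists>x. legal_move V E P B B x"
proof -
  have nm: "\<not> sepy_cond V E P B" by (rule no_mono[OF I])
  from nd have "\<not> dom_cond1 V E B" by (simp add: dom_cond_def)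
  then obtain v where v: "v \<in> V" "cnbhd V E v \<inter> B = {}"
    using nm by (auto simp: dom_cond1_def sepy_cond_def)
  have "\<not> cnbhd V E v \<subseteq> P" using nm v by (auto simp: sepy_cond_def)
  then obtain y where y: "y \<in> cnbhd V E v" "y \<notin> P" by blast
  have "y \<notin> B" using y v by blast
  have "v \<in> cnbhd V E y" using y v sym by (auto simp: cnbhd_def)
  then show ?thesis using y \<open>y \<notin> B\<close> v
    by (auto simp: legal_move_def cnbhd_def)
qed

lemma dom_undominated:
  assumes I: "Inv P B" and nd: "\<not> dom_cond V E P B"
  shows "\<exists>w\<in>V. cnbhd V E w \<inter> P = {}"
proof -
  have nm: "\<not> sepy_cond V E P B" by (rule no_mono[OF I])
  from nd have "\<not> dom_cond1 V E P" by (simp add: dom_cond_def)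
  then show ?thesis using nm by (auto simp: dom_cond1_def sepy_cond_def)
qed

end

context bmatch
begin

lemma free_move:
  assumes I: "Inv P B" and w: "w \<in> V" "cnbhd V E w \<inter> P = {}"
  shows "\<exists>y. legal_move V E P B P y \<and> Inv (insert y P) B"
proof -
  from I have PV: "P \<subseteq> V" and BV: "B \<subseteq> V" and disj: "P \<inter> B = {}"
    and I1: "\<forall>v\<in>M. v \<in> P \<longrightarrow> pt v \<notin> P"
    and I2: "\<forall>v\<in>M. v \<in> B \<longrightarrow> pt v \<notin> P \<longrightarrow> NP P v \<and> NP P (pt v)"
    and I3: "\<forall>u\<in>V-M. u \<in> B \<longrightarrow> NP P u"
    and I5: "\<forall>u\<in>V-M. u \<in> P \<longrightarrow> (\<exists>w. E u w \<and> w \<in> B)"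
    and I6: "\<forall>v\<in>M. v \<in> P \<longrightarrow> pt v \<notin> P \<longrightarrow> pt v \<notin> B \<longrightarrow> (\<forall>u\<in>V-M. E (pt v) u \<longrightarrow> NP P u)"
    by (simp_all add: Inv_def)
  have wP: "w \<notin> P" using w selfN by blast
  have nbP: "\<And>z. E w z \<Longrightarrow> z \<notin> P" using w EN by blast
  have wB: "w \<notin> B"
  proof
    assume wB: "w \<in> B"
    show False
    proof (cases "w \<in> M")
      case True
      then have "pt w \<notin> P" using nbP ptE by blast
      then have "NP P w" using I2 True wB by blast
      then show False using w by blast
    next
      case False
      then have "NP P w" using I3 wB w by blast
      then show False using w by blast
    qed
  qed
  have legw: "\<And>y. y \<in> cnbhd V E w \<Longrightarrow> y \<notin> P \<Longrightarrow> y \<notin> B \<Longrightarrow> legal_move V E P B P y"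
  proof -
    fix y assume y: "y \<in> cnbhd V E w" "y \<notin> P" "y \<notin> B"
    have "w \<in> cnbhd V E y" using y w sym by (auto simp: cnbhd_def)
    then show "legal_move V E P B P y" using y w by (auto simp: legal_move_def cnbhd_def)
  qed
  show ?thesis
  proof (cases "w \<in> M")
    case False
    note wI = False
    show ?thesis
    proof (cases "\<exists>y. E w y \<and> y \<notin> P \<and> y \<notin> B")
      case True
      then obtain y where y: "E w y" "y \<notin> P" "y \<notin> B" by blast
      have yV: "y \<in> V" using y inV by blast
      have yM: "y \<in> M" using aug1[of w y] wI y by blast
      have ptyP: "pt y \<notin> P"
      proof
        assume a: "pt y \<in> P"
        have "pt y \<in> M" "pt (pt y) = y" using yM ptM ptpt by auto
        then have "\<forall>u\<in>V-M. E y u \<longrightarrow> NP P u" using I6 a y by metis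
        then have "NP P w" using w wI y sym by blast
        then show False using w by blast
      qed
      have leg: "legal_move V E P B P y" using legw y EN by blast
      have "Inv (insert y P) B"
        unfolding Inv_def
      proof (intro conjI)
        show "insert y P \<subseteq> V" using PV yV by blast
        show "B \<subseteq> V" by (rule BV)
        show "insert y P \<inter> B = {}" using disj y by blast
        show "\<forall>v\<in>M. v \<in> insert y P \<longrightarrow> pt v \<notin> insert y P"
          using I1 ptyP ptne yM ptpt by (metis insert_iff)
        show "\<forall>v\<in>M. v \<in> B \<longrightarrow> pt v \<notin> insert y P \<longrightarrow> NP (insert y P) v \<and> NP (insert y P) (pt v)"
          using I2 by blast
        show "\<forall>u\<in>V-M. u \<in> B \<longrightarrow> NP (insert y P) u" using I3 by blast
        show "\<forall>u\<in>V-M. u \<in> insert y P \<longrightarrow> (\<exists>w. E u w \<and> w \<in> B)" using I5 yM by blast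
        show "\<forall>v\<in>M. v \<in> insert y P \<longrightarrow> pt v \<notin> insert y P \<longrightarrow> pt v \<notin> B \<longrightarrow>
                (\<forall>u\<in>V-M. E (pt v) u \<longrightarrow> NP (insert y P) u)"
        proof (intro ballI impI)
          fix v u assume v: "v \<in> M" "v \<in> insert y P" "pt v \<notin> insert y P" "pt v \<notin> B"
            and u: "u \<in> V - M" "E (pt v) u"
          show "NP (insert y P) u"
          proof (cases "v = y")
            case True
            have "u = w"
            proof (rule ccontr)
              assume "u \<noteq> w"
              then show False using aug2[of y w u] yM wI u y True sym by blast
            qed
            then show ?thesis using y sym NP_E by blast
          next
            case False
            then have "NP P u" using I6 v u by blast
            then show ?thesis by blast
          qed
        qed
      qed
      then show ?thesis using leg by blast
    next
      case False
      then have allB: "\<And>z. E w z \<Longrightarrow> z \<in> B" using nbP by blast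
      have leg: "legal_move V E P B P w" using legw selfN w wP wB by blast
      obtain z where z: "E w z" using noiso w by blast
      have "Inv (insert w P) B"
        unfolding Inv_def
      proof (intro conjI)
        show "insert w P \<subseteq> V" using PV w by blast
        show "B \<subseteq> V" by (rule BV)
        show "insert w P \<inter> B = {}" using disj wB by blast
        show "\<forall>v\<in>M. v \<in> insert w P \<longrightarrow> pt v \<notin> insert w P"
          using I1 wI ptM by blast
        show "\<forall>v\<in>M. v \<in> B \<longrightarrow> pt v \<notin> insert w P \<longrightarrow> NP (insert w P) v \<and> NP (insert w P) (pt v)"
          using I2 by blast
        show "\<forall>u\<in>V-M. u \<in> B \<longrightarrow> NP (insert w P) u" using I3 by blast
        show "\<forall>u\<in>V-M. u \<in> insert w P \<longrightarrow> (\<exists>w. E u w \<and> w \<in> B)" using I5 z allB by blast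
        show "\<forall>v\<in>M. v \<in> insert w P \<longrightarrow> pt v \<notin> insert w P \<longrightarrow> pt v \<notin> B \<longrightarrow>
                (\<forall>u\<in>V-M. E (pt v) u \<longrightarrow> NP (insert w P) u)"
          using I6 wI by blast
      qed
      then show ?thesis using leg by blast
    qed
  next
    case True
    note wM = True
    define p where "p = pt w"
    have pM: "p \<in> M" and ptp: "pt p = w" and Ewp: "E w p" and pw: "p \<noteq> w"
      using wM ptM ptpt ptE ptne p_def by auto
    have pP: "p \<notin> P" using nbP Ewp by blast
    show ?thesis
    proof (cases "p \<in> B \<or> (\<forall>u\<in>V-M. E p u \<longrightarrow> E w u)")
      case True
      have leg: "legal_move V E P B P w" using legw selfN w wP wB by blast
      have "Inv (insert w P) B"
        unfolding Inv_def
      proof (intro conjI)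
        show "insert w P \<subseteq> V" using PV w by blast
        show "B \<subseteq> V" by (rule BV)
        show "insert w P \<inter> B = {}" using disj wB by blast
        show "\<forall>v\<in>M. v \<in> insert w P \<longrightarrow> pt v \<notin> insert w P"
          using I1 pP pw p_def ptpt by (metis insert_iff)
        show "\<forall>v\<in>M. v \<in> B \<longrightarrow> pt v \<notin> insert w P \<longrightarrow> NP (insert w P) v \<and> NP (insert w P) (pt v)"
          using I2 by blast
        show "\<forall>u\<in>V-M. u \<in> B \<longrightarrow> NP (insert w P) u" using I3 by blast
        show "\<forall>u\<in>V-M. u \<in> insert w P \<longrightarrow> (\<exists>w. E u w \<and> w \<in> B)" using I5 wM by blast
        show "\<forall>v\<in>M. v \<in> insert w P \<longrightarrow> pt v \<notin> insert w P \<longrightarrow> pt v \<notin> B \<longrightarrow>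
                (\<forall>u\<in>V-M. E (pt v) u \<longrightarrow> NP (insert w P) u)"
        proof (intro ballI impI)
          fix v u assume v: "v \<in> M" "v \<in> insert w P" "pt v \<notin> insert w P" "pt v \<notin> B"
            and u: "u \<in> V - M" "E (pt v) u"
          show "NP (insert w P) u"
          proof (cases "v = w")
            case vw: True
            then have "p \<notin> B" using v p_def by simp
            then have "E w u" using True u vw p_def by blast
            then show ?thesis using sym NP_E by blast
          next
            case False
            then have "NP P u" using I6 v u by blast
            then show ?thesis by blast
          qed
        qed
      qed
      then show ?thesis using leg by blast
    next
      case False
      then have pB: "p \<notin> B" and u0: "\<exists>u0\<in>V-M. E p u0 \<and> \<not> E w u0" by blast+
      then obtain u0 where u0: "u0 \<in> V - M" "E p u0" "\<not> E w u0" by blast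
      have leg: "legal_move V E P B P p" using legw EN Ewp pP pB by blast
      have pV: "p \<in> V" using pM MV by blast
      have "Inv (insert p P) B"
        unfolding Inv_def
      proof (intro conjI)
        show "insert p P \<subseteq> V" using PV pV by blast
        show "B \<subseteq> V" by (rule BV)
        show "insert p P \<inter> B = {}" using disj pB by blast
        show "\<forall>v\<in>M. v \<in> insert p P \<longrightarrow> pt v \<notin> insert p P"
          using I1 wP pw ptp ptpt by (metis insert_iff)
        show "\<forall>v\<in>M. v \<in> B \<longrightarrow> pt v \<notin> insert p P \<longrightarrow> NP (insert p P) v \<and> NP (insert p P) (pt v)"
          using I2 by blast
        show "\<forall>u\<in>V-M. u \<in> B \<longrightarrow> NP (insert p P) u" using I3 by blast
        show "\<forall>u\<in>V-M. u \<in> insert p P \<longrightarrow> (\<exists>w. E u w \<and> w \<in> B)" using I5 pM by blast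
        show "\<forall>v\<in>M. v \<in> insert p P \<longrightarrow> pt v \<notin> insert p P \<longrightarrow> pt v \<notin> B \<longrightarrow>
                (\<forall>u\<in>V-M. E (pt v) u \<longrightarrow> NP (insert p P) u)"
        proof (intro ballI impI)
          fix v u assume v: "v \<in> M" "v \<in> insert p P" "pt v \<notin> insert p P" "pt v \<notin> B"
            and u: "u \<in> V - M" "E (pt v) u"
          show "NP (insert p P) u"
          proof (cases "v = p")
            case True
            then have "E w u" using u ptp by simp
            have "u = u0"
            proof (rule ccontr)
              assume "u \<noteq> u0"
              then show False using aug2[of w u u0] wM u u0 \<open>E w u\<close> p_def by blast
            qed
            then show ?thesis using u0 \<open>E w u\<close> by blast
          next
            case False
            then have "NP P u" using I6 v u by blast
            then show ?thesis by blast
          qed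
        qed
      qed
      then show ?thesis using leg by blast
    qed
  qed
qed

end

context bmatch
begin

lemma sepy_move_lemma:
  assumes I: "Inv P B" and L: "legal_move V E P B B x"
  shows "\<not> sepy_cond V E P (insert x B) \<and>
     (Inv P (insert x B) \<or>
      (\<exists>y. legal_move V E P (insert x B) P y \<and> Inv (insert y P) (insert x B)))"
proof -
  from I have PV: "P \<subseteq> V" and BV: "B \<subseteq> V" and disj: "P \<inter> B = {}"
    and I1: "\<forall>v\<in>M. v \<in> P \<longrightarrow> pt v \<notin> P"
    and I2: "\<forall>v\<in>M. v \<in> B \<longrightarrow> pt v \<notin> P \<longrightarrow> NP P v \<and> NP P (pt v)"
    and I3: "\<forall>u\<in>V-M. u \<in> B \<longrightarrow> NP P u"
    and I5: "\<forall>u\<in>V-M. u \<in> P \<longrightarrow> (\<exists>w. E u w \<and> w \<in> B)"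
    and I6: "\<forall>v\<in>M. v \<in> P \<longrightarrow> pt v \<notin> P \<longrightarrow> pt v \<notin> B \<longrightarrow> (\<forall>u\<in>V-M. E (pt v) u \<longrightarrow> NP P u)"
    by (simp_all add: Inv_def)
  from L have xV: "x \<in> V" and xP: "x \<notin> P" and xB: "x \<notin> B"
    and q: "\<exists>q\<in>cnbhd V E x. cnbhd V E q \<inter> B = {}"
    by (auto simp: legal_move_def)
  let ?B = "insert x B"
  have disj': "P \<inter> ?B = {}" using disj xP by blast
  have xnb: "\<exists>y. E x y \<and> y \<notin> B"
  proof -
    obtain q where q1: "q \<in> cnbhd V E x" and q2: "cnbhd V E q \<inter> B = {}" using q by blast
    show ?thesis
    proof (cases "q = x")
      case True
      obtain z where "E x z" using noiso xV by blast
      then show ?thesis using q2 True EN by blast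
    next
      case False
      then have "E x q" using q1 by (simp add: cnbhd_def)
      moreover have "q \<notin> B" using q2 q1 selfN by (auto simp: cnbhd_def)
      ultimately show ?thesis by blast
    qed
  qed
  have nm: "\<not> sepy_cond V E P ?B"
  proof
    assume "sepy_cond V E P ?B"
    then obtain v where v: "v \<in> V" and c: "cnbhd V E v \<subseteq> P \<or> cnbhd V E v \<subseteq> ?B"
      by (auto simp: sepy_cond_def)
    from c show False
    proof
      assume "cnbhd V E v \<subseteq> P"
      then have "sepy_cond V E P B" using v by (auto simp: sepy_cond_def)
      then show False using no_mono[OF I] by blast
    next
      assume s: "cnbhd V E v \<subseteq> ?B"
      show False
      proof (cases "v = x")
        case True
        obtain y where "E x y" "y \<notin> B" using xnb by blast
        moreover have "y \<noteq> x" using \<open>E x y\<close> irr by metis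
        ultimately show False using s True EN by blast
      next
        case False
        then have vB: "v \<in> B" using s selfN v by blast
        have "NP P v"
        proof (cases "v \<in> M")
          case True
          then have "pt v \<in> ?B" using s EN ptE by blast
          then have "pt v \<notin> P" using disj' by blast
          then show ?thesis using I2 True vB by blast
        next
          case False
          then show ?thesis using I3 vB v by blast
        qed
        then show False using s disj' by blast
      qed
    qed
  qed
  have rest: "Inv P ?B \<or> (\<exists>y. legal_move V E P ?B P y \<and> Inv (insert y P) ?B)"
  proof (cases "x \<in> M \<and> pt x \<notin> P \<and> pt x \<notin> B \<and> legal_move V E P ?B P (pt x)")
    case True
    define p where "p = pt x"
    have xM: "x \<in> M" and pP: "p \<notin> P" and pB: "p \<notin> B" and leg: "legal_move V E P ?B P p"
      using True p_def by auto
    have pM: "p \<in> M" and ptp: "pt p = x" and px: "p \<noteq> x" and pV: "p \<in> V"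
      using xM ptM ptpt ptne p_def MV by auto
    have "Inv (insert p P) ?B"
      unfolding Inv_def
    proof (intro conjI)
      show "insert p P \<subseteq> V" using PV pV by blast
      show "?B \<subseteq> V" using BV xV by blast
      show "insert p P \<inter> ?B = {}" using disj' pB px by blast
      show "\<forall>v\<in>M. v \<in> insert p P \<longrightarrow> pt v \<notin> insert p P"
        using I1 xP px ptp ptpt by (metis insert_iff)
      show "\<forall>v\<in>M. v \<in> ?B \<longrightarrow> pt v \<notin> insert p P \<longrightarrow> NP (insert p P) v \<and> NP (insert p P) (pt v)"
        using I2 p_def by blast
      show "\<forall>u\<in>V-M. u \<in> ?B \<longrightarrow> NP (insert p P) u" using I3 xM by blast
      show "\<forall>u\<in>V-M. u \<in> insert p P \<longrightarrow> (\<exists>w. E u w \<and> w \<in> ?B)" using I5 pM by blast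
      show "\<forall>v\<in>M. v \<in> insert p P \<longrightarrow> pt v \<notin> insert p P \<longrightarrow> pt v \<notin> ?B \<longrightarrow>
              (\<forall>u\<in>V-M. E (pt v) u \<longrightarrow> NP (insert p P) u)"
        using I6 ptp by blast
    qed
    then show ?thesis using leg by blast
  next
    case notA: False
    show ?thesis
    proof (cases "x \<notin> M \<and> \<not> NP P x")
      case True
      then have xI: "x \<notin> M" and xnp: "cnbhd V E x \<inter> P = {}" by auto
      obtain y where y: "E x y" "y \<notin> B" using xnb by blast
      have yP: "y \<notin> P" using y xnp EN by blast
      have yx: "y \<noteq> x" using y irr by metis
      have yV: "y \<in> V" using y inV by blast
      have yM: "y \<in> M" using aug1[of x y] xI y by blast
      have ptyP: "pt y \<notin> P"
      proof
        assume a: "pt y \<in> P"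
        have "pt y \<in> M" "pt (pt y) = y" using yM ptM ptpt by auto
        then have "\<forall>u\<in>V-M. E y u \<longrightarrow> NP P u" using I6 a y yP by metis
        then have "NP P x" using xV xI y sym by blast
        then show False using xnp by blast
      qed
      have leg: "legal_move V E P ?B P y"
      proof -
        have "x \<in> cnbhd V E y" using y sym EN by blast
        then show ?thesis using yV yP y yx xnp by (auto simp: legal_move_def)
      qed
      have "Inv (insert y P) ?B"
        unfolding Inv_def
      proof (intro conjI)
        show "insert y P \<subseteq> V" using PV yV by blast
        show "?B \<subseteq> V" using BV xV by blast
        show "insert y P \<inter> ?B = {}" using disj' y yx by blast
        show "\<forall>v\<in>M. v \<in> insert y P \<longrightarrow> pt v \<notin> insert y P"
          using I1 ptyP ptne yM ptpt by (metis insert_iff)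
        show "\<forall>v\<in>M. v \<in> ?B \<longrightarrow> pt v \<notin> insert y P \<longrightarrow> NP (insert y P) v \<and> NP (insert y P) (pt v)"
          using I2 xI by blast
        show "\<forall>u\<in>V-M. u \<in> ?B \<longrightarrow> NP (insert y P) u"
        proof (intro ballI impI)
          fix u assume u: "u \<in> V - M" "u \<in> ?B"
          show "NP (insert y P) u"
          proof (cases "u = x")
            case True then show ?thesis using y NP_E by blast
          next
            case False then show ?thesis using I3 u by blast
          qed
        qed
        show "\<forall>u\<in>V-M. u \<in> insert y P \<longrightarrow> (\<exists>w. E u w \<and> w \<in> ?B)" using I5 yM by blast
        show "\<forall>v\<in>M. v \<in> insert y P \<longrightarrow> pt v \<notin> insert y P \<longrightarrow> pt v \<notin> ?B \<longrightarrow>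
                (\<forall>u\<in>V-M. E (pt v) u \<longrightarrow> NP (insert y P) u)"
        proof (intro ballI impI)
          fix v u assume v: "v \<in> M" "v \<in> insert y P" "pt v \<notin> insert y P" "pt v \<notin> ?B"
            and u: "u \<in> V - M" "E (pt v) u"
          show "NP (insert y P) u"
          proof (cases "v = y")
            case True
            have "u = x"
            proof (rule ccontr)
              assume "u \<noteq> x"
              then show False using aug2[of y x u] yM xI u y True sym by blast
            qed
            then show ?thesis using y NP_E by blast
          next
            case False
            then have "NP P u" using I6 v u by blast
            then show ?thesis by blast
          qed
        qed
      qed
      then show ?thesis using leg by blast
    next
      case notB: False
      have "Inv P ?B"
        unfolding Inv_def
      proof (intro conjI)
        show "P \<subseteq> V" by (rule PV)
        show "?B \<subseteq> V" using BV xV by blast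
        show "P \<inter> ?B = {}" by (rule disj')
        show "\<forall>v\<in>M. v \<in> P \<longrightarrow> pt v \<notin> P" by (rule I1)
        show "\<forall>v\<in>M. v \<in> ?B \<longrightarrow> pt v \<notin> P \<longrightarrow> NP P v \<and> NP P (pt v)"
        proof (intro ballI impI)
          fix v assume v: "v \<in> M" "v \<in> ?B" "pt v \<notin> P"
          show "NP P v \<and> NP P (pt v)"
          proof (cases "v = x")
            case False then show ?thesis using I2 v by blast
          next
            case vx: True
            define p where "p = pt x"
            have pM: "p \<in> M" and ptp: "pt p = x" and pV: "p \<in> V" and px: "p \<noteq> x"
              and Exp: "E x p"
              using v vx ptM ptpt MV ptne ptE p_def by auto
            have pP: "p \<notin> P" using v vx p_def by simp
            show ?thesis
            proof (cases "p \<in> B")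
              case True
              then have "NP P p \<and> NP P (pt p)" using I2 pM ptp xP by auto
              then show ?thesis using ptp vx p_def by auto
            next
              case False
              then have "\<not> legal_move V E P ?B P p" using notA v vx pP p_def by blast
              then have "\<forall>u\<in>cnbhd V E p. NP P u"
                using pV pP False px by (auto simp: legal_move_def)
              moreover have "x \<in> cnbhd V E p" "p \<in> cnbhd V E p"
                using Exp sym EN selfN pV by auto
              ultimately show ?thesis using vx p_def by auto
            qed
          qed
        qed
        show "\<forall>u\<in>V-M. u \<in> ?B \<longrightarrow> NP P u"
        proof (intro ballI impI)
          fix u assume u: "u \<in> V - M" "u \<in> ?B"
          show "NP P u"
          proof (cases "u = x")
            case True then show ?thesis using notB u by blast
          next
            case False then show ?thesis using I3 u by blast
          qed
        qed
        show "\<forall>u\<in>V-M. u \<in> P \<longrightarrow> (\<exists>w. E u w \<and> w \<in> ?B)" using I5 by blast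
        show "\<forall>v\<in>M. v \<in> P \<longrightarrow> pt v \<notin> P \<longrightarrow> pt v \<notin> ?B \<longrightarrow> (\<forall>u\<in>V-M. E (pt v) u \<longrightarrow> NP P u)"
          using I6 by blast
      qed
      then show ?thesis by blast
    qed
  qed
  show ?thesis using nm rest by blast
qed

end

context bmatch
begin

lemma card_less:
  assumes "z \<in> V" "z \<notin> P \<union> B" "P \<union> B \<subseteq> P' \<union> B'" "z \<in> P' \<union> B'"
  shows "card (V - (P' \<union> B')) < card (V - (P \<union> B))"
proof (rule psubset_card_mono)
  show "finite (V - (P \<union> B))" using fin by blast
  show "V - (P' \<union> B') \<subset> V - (P \<union> B)" using assms by blast
qed

lemma main:
  assumes "Inv P B"
  shows "dom_forces V E True P B \<and> dom_forces V E False P B"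
  using assms
proof (induction "card (V - (P \<union> B))" arbitrary: P B rule: less_induct)
  case less
  note I = less.prems
  have nm: "\<not> sepy_cond V E P B" by (rule no_mono[OF I])
  have T: "dom_forces V E True P B"
  proof (cases "dom_cond V E P B")
    case True then show ?thesis using dom_forces.terminal nm by blast
  next
    case False
    then obtain w where "w \<in> V" "cnbhd V E w \<inter> P = {}" using dom_undominated I by blast
    then obtain y where leg: "legal_move V E P B P y" and I': "Inv (insert y P) B"
      using free_move I by blast
    have "y \<in> V" "y \<notin> P \<union> B" using leg by (auto simp: legal_move_def)
    then have "card (V - (insert y P \<union> B)) < card (V - (P \<union> B))"
      by (intro card_less) auto
    then have "dom_forces V E False (insert y P) B" using less.hyps I' by blast
    then show ?thesis by (rule dom_forces.dom_move[OF nm False leg])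
  qed
  have F: "dom_forces V E False P B"
  proof (cases "dom_cond V E P B")
    case True then show ?thesis using dom_forces.terminal nm by blast
  next
    case nd: False
    have ex: "\<exists>v. legal_move V E P B B v" using sepy_has_move I nd by blast
    have all: "\<forall>x. legal_move V E P B B x \<longrightarrow> dom_forces V E True P (insert x B)"
    proof (intro allI impI)
      fix x assume L: "legal_move V E P B B x"
      have xV: "x \<in> V" "x \<notin> P \<union> B" using L by (auto simp: legal_move_def)
      have S: "\<not> sepy_cond V E P (insert x B) \<and>
           (Inv P (insert x B) \<or>
            (\<exists>y. legal_move V E P (insert x B) P y \<and> Inv (insert y P) (insert x B)))"
        by (rule sepy_move_lemma[OF I L])
      show "dom_forces V E True P (insert x B)"
      proof (cases "Inv P (insert x B)")
        case True
        have "card (V - (P \<union> insert x B)) < card (V - (P \<union> B))"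
          using xV by (intro card_less) auto
        then show ?thesis using less.hyps True by blast
      next
        case False
        then obtain y where leg: "legal_move V E P (insert x B) P y"
          and I': "Inv (insert y P) (insert x B)" using S by blast
        show ?thesis
        proof (cases "dom_cond V E P (insert x B)")
          case True then show ?thesis using dom_forces.terminal S by blast
        next
          case nd2: False
          have "card (V - (insert y P \<union> insert x B)) < card (V - (P \<union> B))"
            using xV by (intro card_less) auto
          then have "dom_forces V E False (insert y P) (insert x B)" using less.hyps I' by blast
          then show ?thesis using S by (intro dom_forces.dom_move[OF _ nd2 leg]) auto
        qed
      qed
    qed
    show ?thesis using dom_forces.sepy_move[OF nm nd ex all] .
  qed
  show ?case using T F by blast
qed

lemma Inv_empty: "Inv {} {}"
  by (simp add: Inv_def)

end

theorem theorem12: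
  fixes V :: "'a set" and E :: "'a \<Rightarrow> 'a \<Rightarrow> bool"
  assumes "finite V"
    and "\<And>u v. E u v \<Longrightarrow> u \<in> V \<and> v \<in> V"
    and "\<And>u v. E u v \<Longrightarrow> E v u"
    and "\<And>v. \<not> E v v"
    and "\<And>v. v \<in> V \<Longrightarrow> \<exists>u. E v u"
  shows "dom_forces V E True {} {} \<and> dom_forces V E False {} {}"
proof -
  interpret bgame V E using assms by unfold_locales
  obtain K q where K: "matching K q" and mx: "\<forall>K' q'. matching K' q' \<longrightarrow> card K' \<le> card K"
    using max_matching_ex by blast
  interpret bmatch V E K q using K mx by unfold_locales blast+
  show ?thesis using main[OF Inv_empty] .
qed

end
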